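(* Let $d$ and $t$ be integers with $d \geq 3t-5$ and $t \geq 4$. Then every edge-coloring of $W_d$ using at least $\left\lfloor \frac{2t-5}{t-2} d \right\rfloor + 1$ colors contains a rainbow subgraph isomorphic to $F_t$; that is, \[ \mathrm{rb}(W_d, F_t) \le \left\lfloor \frac{2t-5}{t-2}\, d \right\rfloor + 1 . \]
   Context: A subgraph of an edge-colored graph is rainbow if no two of its edges have the same color. For graphs $G$ and $H$, the rainbow number $\mathrm{rb}(G,H)$ is the minimum integer $k$ such that every edge-coloring of $G$ that uses at least $k$ distinct colors contains a rainbow subgraph isomorphic to $H$. $W_d$ is the wheel: a hub vertex adjacent to all vertices of a cycle $v_1\cdots v_dv_1$. The fan $F_t$ is obtained from a cycle $v_1v_2\cdots v_tv_1$ by adding all chords $v_1v_i$, $3 \le i \le t-1$. *)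

theory Defs
  imports Complex_Main
begin

definition wheel_vertices :: "nat \<Rightarrow> nat set" where
  "wheel_vertices d = {0..d}"

definition wheel_edges :: "nat \<Rightarrow> nat set set" where
  "wheel_edges d =
     {{0, i} | i. 1 \<le> i \<and> i \<le> d}
   \<union> {{i, i + 1} | i. 1 \<le> i \<and> i < d}
   \<union> {{d, 1}}"

definition fan_vertices :: "nat \<Rightarrow> nat set" where
  "fan_vertices t = {1..t}"

definition fan_edges :: "nat \<Rightarrow> nat set set" where
  "fan_edges t =
     {{i, i + 1} | i. 1 \<le> i \<and> i < t}
   \<union> {{t, 1}}
   \<union> {{1, i} | i. 3 \<le> i \<and> i \<le> t - 1}"

definition has_rainbow_copy ::
  "nat set set \<Rightarrow> (nat set \<Rightarrow> 'c) \<Rightarrow> nat set \<Rightarrow> nat set set \<Rightarrow> bool" where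
  "has_rainbow_copy E c HV HE \<longleftrightarrow>
     (\<exists>f :: nat \<Rightarrow> nat. inj_on f HV \<and> (\<forall>e\<in>HE. f ` e \<in> E) \<and>
        inj_on (\<lambda>e. c (f ` e)) HE)"

end

theory Submission
  imports Defs
begin

definition rv :: "nat \<Rightarrow> nat \<Rightarrow> nat" where "rv d i = i mod d + 1"
definition sp :: "nat \<Rightarrow> nat \<Rightarrow> nat set" where "sp d i = {0, rv d i}"
definition rm :: "nat \<Rightarrow> nat \<Rightarrow> nat set" where "rm d i = {rv d i, rv d (Suc i)}"
definition Wn :: "nat \<Rightarrow> nat \<Rightarrow> nat \<Rightarrow> nat set set" where
  "Wn d t p = sp d ` {p..<p+(t-1)} \<union> rm d ` {p..<p+(t-2)}"

lemma rm_mod: "rm d (i mod d) = rm d i" by (simp add: rm_def rv_def mod_Suc_eq)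
lemma sp_mod: "sp d (i mod d) = sp d i" by (simp add: sp_def rv_def)

lemma mod_inj_window:
  fixes a b d p :: nat
  assumes "a mod d = b mod d" "p \<le> a" "a < p + d" "p \<le> b" "b < p + d"
  shows "a = b"
proof -
  { fix m n :: nat assume "m mod d = n mod d" "n \<le> m" "m - n < d"
    then have "d dvd m - n" using mod_eq_dvd_iff_nat by blast
    then have "m = n" using \<open>m - n < d\<close> \<open>n \<le> m\<close>
      by (metis diff_is_0_eq dvd_imp_le le_antisym linorder_not_le zero_less_diff) }
  note * = this
  show ?thesis
  proof (cases "b \<le> a")
    case True then show ?thesis using *[of a b] assms by auto
  next
    case False
    then have "b - a < d" using assms by linarith
    then show ?thesis using *[of b a] assms(1)[symmetric] False by auto
  qed
qed

lemma wI: "1 \<le> i \<Longrightarrow> i \<le> d \<Longrightarrow> {0,i} \<in> wheel_edges d"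
  unfolding wheel_edges_def by (intro UnI1, rule CollectI, rule exI[of _ i]) simp
lemma wR: "1 \<le> i \<Longrightarrow> i < d \<Longrightarrow> {i,i+1} \<in> wheel_edges d"
  unfolding wheel_edges_def by (intro UnI1 UnI2, rule CollectI, rule exI[of _ i]) simp
lemma wL: "{d,1} \<in> wheel_edges d"
  unfolding wheel_edges_def by simp
lemma wheel_edges_eq:
  assumes "d \<ge> 2"
  shows "wheel_edges d = sp d ` {..<d} \<union> rm d ` {..<d}"
proof
  show "wheel_edges d \<subseteq> sp d ` {..<d} \<union> rm d ` {..<d}"
  proof
    fix e assume "e \<in> wheel_edges d"
    then consider (a) i where "e = {0,i}" "1 \<le> i" "i \<le> d"
      | (b) i where "e = {i,i+1}" "1 \<le> i" "i < d" | (c) "e = {d,1}"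
      unfolding wheel_edges_def by blast
    then show "e \<in> sp d ` {..<d} \<union> rm d ` {..<d}"
    proof cases
      case a
      then have "e = sp d (i - 1)" by (simp add: sp_def rv_def)
      then show ?thesis using a by auto
    next
      case b
      then have "e = rm d (i - 1)" by (simp add: rm_def rv_def)
      then show ?thesis using b by auto
    next
      case c
      then have "e = rm d (d - 1)" using assms by (simp add: rm_def rv_def)
      then show ?thesis using assms by auto
    qed
  qed
next
  show "sp d ` {..<d} \<union> rm d ` {..<d} \<subseteq> wheel_edges d"
  proof
    fix e assume "e \<in> sp d ` {..<d} \<union> rm d ` {..<d}"
    then consider (a) i where "e = sp d i" "i < d" | (b) i where "e = rm d i" "i < d" by blast
    then show "e \<in> wheel_edges d"
    proof cases
      case a
      then have "e = {0, i+1}" by (simp add: sp_def rv_def)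
      then show ?thesis using wI[of "i+1" d] a by simp
    next
      case b
      show ?thesis
      proof (cases "Suc i < d")
        case True
        then have "e = {i+1, (i+1)+1}" using b by (simp add: rm_def rv_def)
        then show ?thesis using wR[of "i+1" d] True by simp
      next
        case False
        then have "Suc i = d" using b by auto
        then have "e = {d, 1}" using b by (auto simp add: rm_def rv_def)
        then show ?thesis using wL by simp
      qed
    qed
  qed
qed

lemma sp_in: "d \<ge> 2 \<Longrightarrow> sp d i \<in> wheel_edges d"
  using wheel_edges_eq[of d] sp_mod[of d i]
  by (metis UnI1 image_eqI lessThan_iff mod_less_divisor not_numeral_le_zero not_gr_zero)

lemma rm_in: "d \<ge> 2 \<Longrightarrow> rm d i \<in> wheel_edges d"
  using wheel_edges_eq[of d] rm_mod[of d i]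
  by (metis UnI2 image_eqI lessThan_iff mod_less_divisor not_numeral_le_zero not_gr_zero)

lemma fan_edges_eq:
  "fan_edges t = (\<lambda>i. {i,i+1}) ` {1..<t} \<union> {{t,1}} \<union> (\<lambda>i. {1,i}) ` {3..t-1}"
  unfolding fan_edges_def by auto

lemma fan_fin: "finite (fan_edges t)" by (simp add: fan_edges_eq)

lemma fan_card: "t \<ge> 4 \<Longrightarrow> card (fan_edges t) \<le> 2*t-3"
proof -
  assume t: "t \<ge> 4"
  have "card (fan_edges t) \<le> card ((\<lambda>i. {i,i+1}) ` {1..<t} \<union> {{t,1}}) + card ((\<lambda>i. {1,i}) ` {3..t-1})"
    unfolding fan_edges_eq by (rule card_Un_le)
  also have "\<dots> \<le> card ((\<lambda>i. {i,i+1}) ` {1..<t}) + 1 + card ((\<lambda>i. {1,i}) ` {3..t-1})"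
    using card_Un_le[of "(\<lambda>i. {i,i+1}) ` {1..<t}" "{{t,1}}"] by simp
  also have "\<dots> \<le> card {1..<t} + 1 + card {3..t-1}"
    using card_image_le[of "{1..<t}" "(\<lambda>i. {i,i+1})"] card_image_le[of "{3..t-1}" "(\<lambda>i. {1,i})"]
    by simp
  also have "\<dots> = 2*t-3" using t by simp
  finally show ?thesis .
qed


lemma window_rainbow:
  fixes c :: "nat set \<Rightarrow> 'c"
  assumes t: "t \<ge> 4" and d: "t - 1 \<le> d" "d \<ge> 2"
    and cw: "card (c ` Wn d t p) \<ge> 2*t-3"
  shows "has_rainbow_copy (wheel_edges d) c (fan_vertices t) (fan_edges t)"
proof -
  define f where "f j = (if j = 1 then 0 else rv d (p + j - 2))" for j
  have inj: "inj_on f (fan_vertices t)"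
  proof (rule inj_onI)
    fix x y assume x: "x \<in> fan_vertices t" and y: "y \<in> fan_vertices t" and fxy: "f x = f y"
    show "x = y"
    proof (cases "x = 1 \<or> y = 1")
      case True
      then show ?thesis using fxy by (auto simp: f_def rv_def split: if_splits)
    next
      case False
      then have "(p + x - 2) mod d = (p + y - 2) mod d" using fxy by (simp add: f_def rv_def)
      moreover have "p \<le> p + x - 2" "p + x - 2 < p + d" "p \<le> p + y - 2" "p + y - 2 < p + d"
        using x y False d t by (auto simp: fan_vertices_def)
      ultimately have "p + x - 2 = p + y - 2" by (rule mod_inj_window)
      then show ?thesis using x y False by (auto simp: fan_vertices_def)
    qed
  qed
  have img: "\<forall>e\<in>fan_edges t. f ` e \<in> wheel_edges d"
  proof
    fix e assume "e \<in> fan_edges t"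
    then consider (a) i where "e = {i,i+1}" "1 \<le> i" "i < t" | (b) "e = {t,1}"
      | (c) i where "e = {1,i}" "3 \<le> i" "i \<le> t - 1"
    proof -
      assume h1: "\<And>i. e = {i,i+1} \<Longrightarrow> 1 \<le> i \<Longrightarrow> i < t \<Longrightarrow> thesis"
        and h2: "e = {t,1} \<Longrightarrow> thesis"
        and h3: "\<And>i. e = {1,i} \<Longrightarrow> 3 \<le> i \<Longrightarrow> i \<le> t - 1 \<Longrightarrow> thesis"
      have "(e \<in> (\<lambda>i. {i,i+1}) ` {1..<t} \<or> e = {t,1}) \<or> e \<in> (\<lambda>i. {1,i}) ` {3..t-1}"
        using \<open>e \<in> fan_edges t\<close> unfolding fan_edges_eq by (simp only: Un_iff singleton_iff)
      then show thesis
      proof (elim disjE imageE)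
        fix i assume "e = {i, i+1}" "i \<in> {1..<t}" then show thesis using h1 by simp
      next
        assume "e = {t,1}" then show thesis using h2 by simp
      next
        fix i assume "e = {1,i}" "i \<in> {3..t-1}" then show thesis using h3 by simp
      qed
    qed
    then show "f ` e \<in> wheel_edges d"
    proof cases
      case a
      show ?thesis
      proof (cases "i = 1")
        case True
        then have "f ` e = sp d p" using a by (simp add: f_def sp_def insert_commute)
        then show ?thesis using sp_in d by simp
      next
        case False
        then have "Suc (p + i - 2) = p + i - 1" using a by linarith
        then have "f ` e = rm d (p + i - 2)" using a False
          by (simp add: f_def rm_def)
        then show ?thesis using rm_in d by simp
      qed
    next
      case b
      then have "f ` e = sp d (p + t - 2)" using t by (auto simp add: f_def sp_def)
      then show ?thesis using sp_in d by simp
    next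
      case c
      then have "f ` e = sp d (p + i - 2)" by (auto simp add: f_def sp_def)
      then show ?thesis using sp_in d by simp
    qed
  qed
  have sub: "c ` Wn d t p \<subseteq> (\<lambda>e. c (f ` e)) ` fan_edges t"
  proof
    fix x assume "x \<in> c ` Wn d t p"
    then obtain w where xw: "x = c w" and w: "w \<in> Wn d t p" by blast
    have "w \<in> sp d ` {p..<p+(t-1)} \<or> w \<in> rm d ` {p..<p+(t-2)}"
      using w unfolding Wn_def by (simp only: Un_iff)
    then show "x \<in> (\<lambda>e. c (f ` e)) ` fan_edges t"
    proof (elim disjE imageE)
      fix y assume wy: "w = sp d y" and y: "y \<in> {p..<p+(t-1)}"
      define j where "j = y - p"
      have yj: "y = p + j" and jt: "j < t - 1" using y by (auto simp: j_def)
      have fe: "f ` {1, j+2} = sp d (p + j)" by (simp add: f_def sp_def insert_commute)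
      have mem: "{1, j+2} \<in> fan_edges t"
      proof -
        consider "j = 0" | "j + 2 = t" | "3 \<le> j + 2" "j + 2 \<le> t - 1" using jt by linarith
        then show ?thesis
        proof cases
          case 1
          then have "{1, j+2} = (\<lambda>i. {i,i+1}) 1" by simp
          moreover have "(1::nat) \<in> {1..<t}" using t by simp
          ultimately have "{1, j+2} \<in> (\<lambda>i. {i,i+1}) ` {1..<t}" by (rule image_eqI)
          then show ?thesis unfolding fan_edges_eq by (intro UnI1)
        next
          case 2
          then have "{1, j+2} = {t,1}" by (simp add: insert_commute)
          then show ?thesis unfolding fan_edges_eq by (intro UnI1 UnI2) simp
        next
          case 3
          then have "{1, j+2} \<in> (\<lambda>i. {1,i}) ` {3..t-1}" by (intro image_eqI[of _ _ "j+2"]) simp_all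
          then show ?thesis unfolding fan_edges_eq by (intro UnI2)
        qed
      qed
      show ?thesis
      proof (rule image_eqI[OF _ mem])
        show "x = c (f ` {1, j+2})" using fe xw wy yj by simp
      qed
    next
      fix y assume wy: "w = rm d y" and y: "y \<in> {p..<p+(t-2)}"
      define j where "j = y - p"
      have yj: "y = p + j" and jt: "j < t - 2" using y by (auto simp: j_def)
      have fe: "f ` {j+2, j+2+1} = rm d (p + j)" by (simp add: f_def rm_def)
      have "{j+2, j+2+1} \<in> (\<lambda>i. {i,i+1}) ` {1..<t}" using jt by (intro image_eqI[of _ _ "j+2"]) simp_all
      then have mem: "{j+2, j+2+1} \<in> fan_edges t" unfolding fan_edges_eq by (intro UnI1)
      show ?thesis
      proof (rule image_eqI[OF _ mem])
        show "x = c (f ` {j+2, j+2+1})" using fe xw wy yj by simp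
      qed
    qed
  qed
  have "card (c ` Wn d t p) \<le> card ((\<lambda>e. c (f ` e)) ` fan_edges t)"
    using sub by (simp add: card_mono fan_fin)
  moreover have "card ((\<lambda>e. c (f ` e)) ` fan_edges t) \<le> card (fan_edges t)"
    by (rule card_image_le[OF fan_fin])
  ultimately have "card ((\<lambda>e. c (f ` e)) ` fan_edges t) = card (fan_edges t)"
    using cw fan_card[OF t] by linarith
  then have "inj_on (\<lambda>e. c (f ` e)) (fan_edges t)"
    using inj_on_iff_eq_card[OF fan_fin] by blast
  then show ?thesis unfolding has_rainbow_copy_def using inj img by blast
qed

lemma step_exists:
  fixes B :: "nat set"
  assumes "B \<subseteq> {..<d}" "B \<noteq> {}" "B \<noteq> {..<d}"
  shows "\<exists>p<d. p \<notin> B \<and> Suc p mod d \<in> B"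
proof (rule ccontr)
  assume H: "\<not> ?thesis"
  obtain p0 where p0: "p0 < d" "p0 \<notin> B" using assms(1,3) by blast
  have d0: "d > 0" using p0 by simp
  have all: "(p0 + n) mod d \<notin> B" for n
  proof (induction n)
    case 0 then show ?case using p0 by simp
  next
    case (Suc n)
    have "(p0 + n) mod d < d" using d0 by simp
    then have "Suc ((p0 + n) mod d) mod d \<notin> B" using H Suc by blast
    then show ?case by (simp add: mod_Suc_eq)
  qed
  obtain b where b: "b \<in> B" using assms(2) by blast
  then have "b < d" using assms(1) by auto
  have "(p0 + (b + d - p0)) mod d = b" using \<open>b < d\<close> p0 by simp
  then show False using all[of "b + d - p0"] b by simp
qed

lemma sumset:
  fixes A :: "nat set"
  assumes A: "A \<subseteq> {..<d}" "A \<noteq> {}"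
  shows "min d (card A + k) \<le> card {p\<in>{..<d}. \<exists>j\<le>k. (p+j) mod d \<in> A}"
proof (induction k)
  case 0
  have "A \<subseteq> {p\<in>{..<d}. \<exists>j\<le>0. (p+j) mod d \<in> A}" using A by auto
  then have "card A \<le> card {p\<in>{..<d}. \<exists>j\<le>0. (p+j) mod d \<in> A}"
    by (intro card_mono) auto
  then show ?case by simp
next
  case (Suc k)
  define S where "S k = {p\<in>{..<d}. \<exists>j\<le>k. (p+j) mod d \<in> A}" for k
  have fin: "finite (S k)" for k unfolding S_def by auto
  have mono: "S k \<subseteq> S (Suc k)" unfolding S_def by (auto intro: le_SucI)
  have sub: "S k \<subseteq> {..<d}" unfolding S_def by auto
  have AS: "A \<subseteq> S k" using A unfolding S_def by force
  show ?case
  proof (cases "S k = {..<d}")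
    case True
    then have "d \<le> card (S (Suc k))" using card_mono[OF fin mono] by simp
    then show ?thesis unfolding S_def by simp
  next
    case False
    have "S k \<noteq> {}" using AS A(2) by blast
    then obtain p where p: "p < d" "p \<notin> S k" "Suc p mod d \<in> S k"
      using step_exists[OF sub _ False] by blast
    then obtain j where j: "j \<le> k" "(Suc p mod d + j) mod d \<in> A" unfolding S_def by blast
    have "(Suc p mod d + j) mod d = (p + Suc j) mod d" by (simp add: mod_add_left_eq)
    then have "p \<in> S (Suc k)" using j p(1) unfolding S_def by fastforce
    then have "insert p (S k) \<subseteq> S (Suc k)" using mono by blast
    then have "card (insert p (S k)) \<le> card (S (Suc k))" by (intro card_mono fin)
    then have "Suc (card (S k)) \<le> card (S (Suc k))" using p(2) fin by simp
    then show ?thesis using Suc.IH unfolding S_def by linarith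
  qed
qed

lemma color_bound:
  fixes c :: "nat set \<Rightarrow> 'c"
  assumes d: "d \<ge> 2" "t \<ge> 4" "t - 2 \<le> d" and g: "g \<in> c ` wheel_edges d"
  shows "min d (card {i\<in>{..<d}. c (sp d i) = g} + (t-2)) \<le> card {p\<in>{..<d}. g \<in> c ` Wn d t p}"
proof (cases "{i\<in>{..<d}. c (sp d i) = g} = {}")
  case False
  define A where "A = {i\<in>{..<d}. c (sp d i) = g}"
  have "min d (card A + (t-2)) \<le> card {p\<in>{..<d}. \<exists>j\<le>t-2. (p+j) mod d \<in> A}"
    using sumset[of A d "t-2"] False unfolding A_def by auto
  also have "\<dots> \<le> card {p\<in>{..<d}. g \<in> c ` Wn d t p}"
  proof (rule card_mono)
    show "finite {p\<in>{..<d}. g \<in> c ` Wn d t p}" by auto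
    show "{p\<in>{..<d}. \<exists>j\<le>t-2. (p+j) mod d \<in> A} \<subseteq> {p\<in>{..<d}. g \<in> c ` Wn d t p}"
    proof
      fix p assume "p \<in> {p\<in>{..<d}. \<exists>j\<le>t-2. (p+j) mod d \<in> A}"
      then obtain j where p: "p < d" "j \<le> t - 2" "(p+j) mod d \<in> A" by blast
      then have "c (sp d (p+j)) = g" unfolding A_def using sp_mod[of d "p+j"] by simp
      moreover have "sp d (p+j) \<in> Wn d t p" unfolding Wn_def using p(2) d(2)
        by (intro UnI1 image_eqI[of _ _ "p+j"]) auto
      ultimately show "p \<in> {p\<in>{..<d}. g \<in> c ` Wn d t p}" using p(1) by force
    qed
  qed
  finally show ?thesis unfolding A_def .
next
  case True
  obtain e where e: "e \<in> wheel_edges d" "c e = g" using g by blast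
  then have "e \<in> sp d ` {..<d} \<union> rm d ` {..<d}" using wheel_edges_eq[OF d(1)] by simp
  moreover have "e \<notin> sp d ` {..<d}" using True e(2) by auto
  ultimately obtain q where q: "q < d" "e = rm d q" by blast
  have "min d (card {q} + (t-3)) \<le> card {p\<in>{..<d}. \<exists>j\<le>t-3. (p+j) mod d \<in> {q}}"
    using sumset[of "{q}" d "t-3"] q by auto
  also have "\<dots> \<le> card {p\<in>{..<d}. g \<in> c ` Wn d t p}"
  proof (rule card_mono)
    show "finite {p\<in>{..<d}. g \<in> c ` Wn d t p}" by auto
    show "{p\<in>{..<d}. \<exists>j\<le>t-3. (p+j) mod d \<in> {q}} \<subseteq> {p\<in>{..<d}. g \<in> c ` Wn d t p}"
    proof
      fix p assume "p \<in> {p\<in>{..<d}. \<exists>j\<le>t-3. (p+j) mod d \<in> {q}}"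
      then obtain j where p: "p < d" "j \<le> t - 3" "(p+j) mod d = q" by blast
      then have "c (rm d (p+j)) = g" using rm_mod[of d "p+j"] e q by simp
      moreover have "rm d (p+j) \<in> Wn d t p" unfolding Wn_def using p(2) d(2)
        by (intro UnI2 image_eqI[of _ _ "p+j"]) auto
      ultimately show "p \<in> {p\<in>{..<d}. g \<in> c ` Wn d t p}" using p(1) by force
    qed
  qed
  finally have "t - 2 \<le> card {p\<in>{..<d}. g \<in> c ` Wn d t p}" using d by simp
  then show ?thesis unfolding True by simp
qed


lemma card_indicator:
  assumes "finite K" "X \<subseteq> K"
  shows "card X = (\<Sum>g\<in>K. of_bool (g \<in> X) :: nat)"
proof -
  have "(\<Sum>g\<in>K. of_bool (g \<in> X) :: nat) = of_nat (card (K \<inter> {g. g \<in> X}))"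
    by (intro sum_of_bool_eq assms(1))
  also have "K \<inter> {g. g \<in> X} = X" using assms(2) by blast
  finally show ?thesis by (simp only: of_nat_id)
qed

lemma swap_count:
  fixes Wc :: "'a \<Rightarrow> 'b set"
  assumes "finite K" "\<forall>p\<in>P. Wc p \<subseteq> K" "finite P"
  shows "(\<Sum>p\<in>P. card (Wc p)) = (\<Sum>g\<in>K. card {p\<in>P. g \<in> Wc p})"
proof -
  have "(\<Sum>p\<in>P. card (Wc p)) = (\<Sum>p\<in>P. \<Sum>g\<in>K. of_bool (g \<in> Wc p) :: nat)"
    using card_indicator[OF assms(1)] assms(2) by (intro sum.cong) auto
  also have "\<dots> = (\<Sum>g\<in>K. \<Sum>p\<in>P. of_bool (g \<in> Wc p) :: nat)" by (rule sum.swap)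
  also have "\<dots> = (\<Sum>g\<in>K. card {p\<in>P. g \<in> Wc p})"
  proof (rule sum.cong)
    fix g assume "g \<in> K"
    have "card {p\<in>P. g \<in> Wc p} = (\<Sum>p\<in>P. of_bool (p \<in> {p\<in>P. g \<in> Wc p}) :: nat)"
      by (rule card_indicator[OF assms(3)]) auto
    also have "\<dots> = (\<Sum>p\<in>P. of_bool (g \<in> Wc p) :: nat)" by (intro sum.cong) auto
    finally show "(\<Sum>p\<in>P. of_bool (g \<in> Wc p) :: nat) = card {p\<in>P. g \<in> Wc p}" by simp
  qed simp
  finally show ?thesis .
qed

lemma fibres_sum:
  assumes "finite K" "h ` I \<subseteq> K" "finite I"
  shows "(\<Sum>g\<in>K. card {i\<in>I. h i = g}) = card I"
proof -
  have "(\<Sum>i\<in>I. card {h i}) = (\<Sum>g\<in>K. card {i\<in>I. g \<in> {h i}})"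
    using assms by (intro swap_count) auto
  then show ?thesis by (simp add: eq_commute)
qed

lemma wheel_card: "d \<ge> 2 \<Longrightarrow> card (wheel_edges d) \<le> 2 * d"
proof -
  assume d: "d \<ge> 2"
  have "card (wheel_edges d) \<le> card (sp d ` {..<d}) + card (rm d ` {..<d})"
    unfolding wheel_edges_eq[OF d] by (rule card_Un_le)
  also have "\<dots> \<le> d + d" using card_image_le[of "{..<d}" "sp d"] card_image_le[of "{..<d}" "rm d"] by simp
  finally show ?thesis by simp
qed

lemma wheel_fin: "d \<ge> 2 \<Longrightarrow> finite (wheel_edges d)"
  using wheel_edges_eq by simp

lemma sp_inj: "inj_on (sp d) {..<d}"
proof (rule inj_onI)
  fix i j assume "i \<in> {..<d}" "j \<in> {..<d}" "sp d i = sp d j"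
  then have "rv d i = rv d j" unfolding sp_def rv_def by (auto simp: doubleton_eq_iff)
  then show "i = j" using \<open>i \<in> {..<d}\<close> \<open>j \<in> {..<d}\<close> by (simp add: rv_def)
qed

lemma big_class:
  fixes c :: "nat set \<Rightarrow> 'c"
  assumes d: "d \<ge> 2"
  shows "card (c ` wheel_edges d) + card {i\<in>{..<d}. c (sp d i) = g} \<le> 2 * d + 1"
proof -
  define A where "A = {i\<in>{..<d}. c (sp d i) = g}"
  define E where "E = wheel_edges d"
  have fE: "finite E" using wheel_fin[OF d] E_def by simp
  have spA: "sp d ` A \<subseteq> E" unfolding A_def E_def using sp_in[OF d] by auto
  have "c ` E \<subseteq> insert g (c ` (E - sp d ` A))" unfolding A_def by auto
  then have "card (c ` E) \<le> card (insert g (c ` (E - sp d ` A)))"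
    using fE by (intro card_mono) auto
  also have "\<dots> \<le> card (c ` (E - sp d ` A)) + 1" by (simp add: card_insert_le_m1 card_insert_if)
  also have "\<dots> \<le> card (E - sp d ` A) + 1" using card_image_le[of "E - sp d ` A" c] fE by simp
  also have "card (E - sp d ` A) = card E - card (sp d ` A)"
    using spA fE by (simp add: card_Diff_subset finite_subset)
  also have "card (sp d ` A) = card A"
    using sp_inj[of d] unfolding A_def by (intro card_image) (auto intro: inj_on_subset)
  finally have "card (c ` E) \<le> card E - card A + 1" .
  moreover have "card A \<le> card E"
    using \<open>card (sp d ` A) = card A\<close> spA fE card_mono by metis
  ultimately show ?thesis using wheel_card[OF d] unfolding A_def E_def by linarith
qed


lemma poly_ineq: "(t::nat) \<ge> 4 \<Longrightarrow> (t-2)*(t-2) < (t-3)*(3*t-5)"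
proof -
  assume "t \<ge> 4"
  then obtain s where "t = s + 4" by (metis add.commute le_iff_add)
  then show ?thesis by (simp add: algebra_simps)
qed

lemma ids:
  fixes t d :: nat assumes "t \<ge> 4"
  shows "(t-2)*(d+t-2) = (t-2)*d + (t-2)*(t-2)" "(2*t-5)*d = (t-2)*d + (t-3)*d"
    "d*(2*t-4) = d + (2*t-5)*d"
proof -
  obtain s where "t = s + 4" using assms by (metis add.commute le_iff_add)
  then show "(t-2)*(d+t-2) = (t-2)*d + (t-2)*(t-2)" "(2*t-5)*d = (t-2)*d + (t-3)*d"
    "d*(2*t-4) = d + (2*t-5)*d" by (simp_all add: algebra_simps)
qed

theorem theorem3p1:
  fixes d t :: nat and c :: "nat set \<Rightarrow> 'c"
  assumes "t \<ge> 4" and "int d \<ge> 3 * int t - 5"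
    and "card (c ` wheel_edges d) \<ge>
           nat \<lfloor>(real (2 * t - 5) / real (t - 2)) * real d\<rfloor> + 1"
  shows "has_rainbow_copy (wheel_edges d) c (fan_vertices t) (fan_edges t)"
proof (rule ccontr)
  assume nr: "\<not> ?thesis"
  have t: "t \<ge> 4" by fact
  have dt: "d \<ge> 3*t - 5" using assms(1,2) by linarith
  have d2: "d \<ge> 2" "t - 1 \<le> d" "t - 2 \<le> d" using dt t by linarith+
  define E where "E = wheel_edges d"
  define K where "K = c ` E"
  define k where "k = card K"
  have fK: "finite K" unfolding K_def E_def using wheel_fin[OF d2(1)] by simp
  have key: "(2*t-5)*d < (t-2)*k"
  proof -
    define x where "x = (real (2 * t - 5) / real (t - 2)) * real d"
    have x0: "x \<ge> 0" unfolding x_def by simp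
    have "real k \<ge> real (nat \<lfloor>x\<rfloor>) + 1" using assms(3) unfolding k_def K_def E_def x_def by simp
    moreover have "real (nat \<lfloor>x\<rfloor>) = of_int \<lfloor>x\<rfloor>" using x0 by simp
    moreover have "of_int \<lfloor>x\<rfloor> + 1 > x" by linarith
    ultimately have "real k > x" by linarith
    then have "real (t-2) * real k > real (2*t-5) * real d"
      unfolding x_def using t by (simp add: field_simps)
    then show ?thesis by (metis of_nat_less_iff of_nat_mult)
  qed
  have win: "card (c ` Wn d t p) \<le> 2*t-4" for p
    using window_rainbow[OF t d2(2) d2(1), of c p] nr by linarith
  define a where "a g = card {i\<in>{..<d}. c (sp d i) = g}" for g
  show False
  proof (cases "\<exists>g\<in>K. d < a g + (t-2)")
    case True
    then obtain g where g: "d < a g + (t-2)" by blast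
    have "k + a g \<le> 2*d + 1" using big_class[OF d2(1), of c g] unfolding k_def K_def E_def a_def .
    then have "k \<le> d + t - 2" using g t by linarith
    then have "(t-2)*k \<le> (t-2)*(d+t-2)" by simp
    with key have "(2*t-5)*d < (t-2)*(d+t-2)" by linarith
    moreover have "(t-2)*(d+t-2) = (t-2)*d + (t-2)*(t-2)" by (rule ids(1)[OF t])
    moreover have "(2*t-5)*d = (t-2)*d + (t-3)*d" by (rule ids(2)[OF t])
    ultimately have "(t-3)*d < (t-2)*(t-2)" by linarith
    moreover have "(t-3)*(3*t-5) \<le> (t-3)*d" using dt by simp
    ultimately show False using poly_ineq[OF t] by linarith
  next
    case False
    then have small: "\<forall>g\<in>K. a g + (t-2) \<le> d" by auto
    have "(\<Sum>p\<in>{..<d}. card (c ` Wn d t p)) = (\<Sum>g\<in>K. card {p\<in>{..<d}. g \<in> c ` Wn d t p})"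
    proof (rule swap_count[OF fK])
      show "\<forall>p\<in>{..<d}. c ` Wn d t p \<subseteq> K"
        unfolding K_def E_def Wn_def using sp_in[OF d2(1)] rm_in[OF d2(1)] by auto
    qed simp
    also have "\<dots> \<ge> (\<Sum>g\<in>K. a g + (t-2))"
    proof (rule sum_mono)
      fix g assume "g \<in> K"
      then have "min d (a g + (t-2)) \<le> card {p\<in>{..<d}. g \<in> c ` Wn d t p}"
        unfolding a_def K_def E_def by (rule color_bound[OF d2(1) t d2(3)])
      then show "a g + (t-2) \<le> card {p\<in>{..<d}. g \<in> c ` Wn d t p}"
        using small \<open>g \<in> K\<close> by simp
    qed
    also have "(\<Sum>g\<in>K. a g + (t-2)) = d + (t-2)*k"
    proof -
      have "(\<Sum>g\<in>K. a g) = card {..<d}" unfolding a_def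
        using fK by (intro fibres_sum) (auto simp: K_def E_def sp_in[OF d2(1)])
      then show ?thesis by (simp add: sum.distrib k_def)
    qed
    finally have "d + (t-2)*k \<le> (\<Sum>p\<in>{..<d}. card (c ` Wn d t p))" .
    also have "\<dots> \<le> (\<Sum>p\<in>{..<d}. 2*t-4)" by (intro sum_mono win)
    also have "\<dots> = d*(2*t-4)" by simp
    finally have "d + (t-2)*k \<le> d*(2*t-4)" .
    moreover have "d*(2*t-4) = d + (2*t-5)*d" by (rule ids(3)[OF t])
    ultimately show False using key by linarith
  qed
qed

end
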